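(* Let $T=(V,E)$ be a tree with labeled leaves $1,\dots,n$, let $(\theta_e)_{e\in E}$ be edge weights in $[-1,1]$, and let $\theta'$ be a weight vector that differs from $\theta$ only on one edge $e'$. Then $\mathrm{TV}(\Pr_{T,\theta}[x],\Pr_{T,\theta'}[x])\le|\theta'_{e'}-\theta_{e'}|/2$.
   Context: For a tree $T$ with edge weights $\theta_e\in[-1,1]$, the Ising model assigns spins $x_v\in\{-1,1\}$ to all nodes with probability $\propto\prod_{(u,v)\in E}\frac{1+\theta_{uv}x_ux_v}{2}$; $\Pr_{T,\theta}[x]$ denotes the induced marginal distribution of the spins $x=(x_1,\dots,x_n)$ of the leaves. $\mathrm{TV}(\mu,\nu)=\frac12\sum_x|\mu(x)-\nu(x)|$. *)

theory Defs
  imports "HOL-Analysis.Analysis"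
begin

definition simple_graph :: "'v set \<Rightarrow> 'v set set \<Rightarrow> bool" where
  "simple_graph V E \<longleftrightarrow> finite V \<and> (\<forall>e\<in>E. \<exists>u v. u \<in> V \<and> v \<in> V \<and> u \<noteq> v \<and> e = {u, v})"

definition adj :: "'v set set \<Rightarrow> 'v \<Rightarrow> 'v \<Rightarrow> bool" where
  "adj E u v \<longleftrightarrow> u \<noteq> v \<and> {u, v} \<in> E"

definition connected_graph :: "'v set \<Rightarrow> 'v set set \<Rightarrow> bool" where
  "connected_graph V E \<longleftrightarrow> V \<noteq> {} \<and>
     (\<forall>u\<in>V. \<forall>v\<in>V. (u, v) \<in> {(a, b). adj E a b}\<^sup>*)"

definition is_cycle :: "'v set set \<Rightarrow> 'v list \<Rightarrow> bool" where
  "is_cycle E cs \<longleftrightarrow> length cs \<ge> 3 \<and> distinct cs \<and>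
     (\<forall>i. Suc i < length cs \<longrightarrow> adj E (cs ! i) (cs ! Suc i)) \<and>
     adj E (last cs) (hd cs)"

definition is_tree :: "'v set \<Rightarrow> 'v set set \<Rightarrow> bool" where
  "is_tree V E \<longleftrightarrow> simple_graph V E \<and> connected_graph V E \<and> \<not> (\<exists>cs. is_cycle E cs)"

definition leaves :: "'v set \<Rightarrow> 'v set set \<Rightarrow> 'v set" where
  "leaves V E = {v \<in> V. card {e \<in> E. v \<in> e} = 1}"

text \<open>Spin configurations on all vertices (fixed to 1 outside V, so the set is finite).\<close>
definition spin_configs :: "'v set \<Rightarrow> ('v \<Rightarrow> real) set" where
  "spin_configs V = {s. (\<forall>v\<in>V. s v = 1 \<or> s v = -1) \<and> (\<forall>v. v \<notin> V \<longrightarrow> s v = 1)}"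

definition ising_weight :: "'v set set \<Rightarrow> ('v set \<Rightarrow> real) \<Rightarrow> ('v \<Rightarrow> real) \<Rightarrow> real" where
  "ising_weight E \<theta> s = (\<Prod>e\<in>E. (1 + \<theta> e * (\<Prod>v\<in>e. s v)) / 2)"

definition partition_fn :: "'v set \<Rightarrow> 'v set set \<Rightarrow> ('v set \<Rightarrow> real) \<Rightarrow> real" where
  "partition_fn V E \<theta> = (\<Sum>s\<in>spin_configs V. ising_weight E \<theta> s)"

definition leaf_configs :: "nat \<Rightarrow> (nat \<Rightarrow> real) set" where
  "leaf_configs n = {x. (\<forall>i\<in>{1..n}. x i = 1 \<or> x i = -1) \<and> (\<forall>i. i \<notin> {1..n} \<longrightarrow> x i = 1)}"

definition leaf_marginal ::
  "'v set \<Rightarrow> 'v set set \<Rightarrow> nat \<Rightarrow> (nat \<Rightarrow> 'v) \<Rightarrow> ('v set \<Rightarrow> real) \<Rightarrow> (nat \<Rightarrow> real) \<Rightarrow> real" where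
  "leaf_marginal V E n lab \<theta> x =
     (\<Sum>s\<in>{s \<in> spin_configs V. \<forall>i\<in>{1..n}. s (lab i) = x i}. ising_weight E \<theta> s)
       / partition_fn V E \<theta>"

definition tv_leaf ::
  "'v set \<Rightarrow> 'v set set \<Rightarrow> nat \<Rightarrow> (nat \<Rightarrow> 'v) \<Rightarrow> ('v set \<Rightarrow> real) \<Rightarrow> ('v set \<Rightarrow> real) \<Rightarrow> real" where
  "tv_leaf V E n lab \<theta> \<theta>' =
     (1/2) * (\<Sum>x\<in>leaf_configs n. \<bar>leaf_marginal V E n lab \<theta> x - leaf_marginal V E n lab \<theta>' x\<bar>)"

end

theory Submission
  imports Defs "HOL-Library.Transitive_Closure_Table"
begin

lemma finite_spin: assumes "finite V" shows "finite (spin_configs V)"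
proof -
  have "spin_configs V \<subseteq> (\<lambda>f w. if w \<in> V then f w else 1) ` (PiE V (\<lambda>_. {1, -1::real}))"
  proof
    fix s assume s: "s \<in> spin_configs V"
    let ?f = "restrict s V"
    have "?f \<in> PiE V (\<lambda>_. {1,-1})" using s by (auto simp: spin_configs_def)
    moreover have "s = (\<lambda>w. if w\<in>V then ?f w else 1)" using s by (auto simp: spin_configs_def)
    ultimately show "s \<in> (\<lambda>f w. if w \<in> V then f w else 1) ` (PiE V (\<lambda>_. {1, -1::real}))" by blast
  qed
  moreover have "finite ((\<lambda>f w. if w \<in> V then f w else 1) ` (PiE V (\<lambda>_. {1, -1::real})))"
    using assms by (intro finite_imageI finite_PiE) auto
  ultimately show ?thesis by (rule finite_subset)
qed

lemma finite_leaf: "finite (leaf_configs n)"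
proof -
  have "leaf_configs n \<subseteq> (\<lambda>f i. if i \<in> {1..n} then f i else 1) ` (PiE {1..n} (\<lambda>_. {1, -1::real}))"
  proof
    fix s assume s: "s \<in> leaf_configs n"
    let ?f = "restrict s {1..n}"
    have "?f \<in> PiE {1..n} (\<lambda>_. {1,-1})" using s by (auto simp: leaf_configs_def)
    moreover have "s = (\<lambda>w. if w\<in>{1..n} then ?f w else 1)" using s by (auto simp: leaf_configs_def)
    ultimately show "s \<in> (\<lambda>f i. if i \<in> {1..n} then f i else 1) ` (PiE {1..n} (\<lambda>_. {1, -1::real}))" by blast
  qed
  thus ?thesis by (rule finite_subset) (intro finite_imageI finite_PiE; simp)
qed

lemma path_props: "rtrancl_path r x xs y \<Longrightarrow>
  (\<forall>i. Suc i < length (x#xs) \<longrightarrow> r ((x#xs)!i) ((x#xs)!Suc i)) \<and> last (x#xs) = y"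
proof (induction rule: rtrancl_path.induct)
  case (base x)
  then show ?case by simp
next
  case (step x y ys z)
  then show ?case by (auto simp: nth_Cons split: nat.split)
qed

lemma cut_exists:
  assumes tree: "is_tree V E" and e': "e' \<in> E" "e' = {u,v}" "u \<noteq> v"
  shows "\<exists>C. u \<in> C \<and> v \<notin> C \<and> (\<forall>e\<in>E-{e'}. \<forall>a\<in>e. \<forall>b\<in>e. (a\<in>C) = (b\<in>C))"
proof -
  define r where "r = adj (E - {e'})"
  define C where "C = {w. r\<^sup>*\<^sup>* u w}"
  have "u \<in> C" by (simp add: C_def)
  moreover have "v \<notin> C"
  proof
    assume "v \<in> C"
    then obtain xs where "rtrancl_path r u xs v" by (auto simp: C_def rtranclp_eq_rtrancl_path)
    then obtain ys where p: "rtrancl_path r u ys v" and d: "distinct (u#ys)" by (rule rtrancl_path_distinct)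
    from path_props[OF p] have c: "\<forall>i. Suc i < length (u#ys) \<longrightarrow> r ((u#ys)!i) ((u#ys)!Suc i)"
      and l: "last (u#ys) = v" by auto
    have "ys \<noteq> []" using l \<open>u\<noteq>v\<close> by auto
    then obtain y ys' where ys: "ys = y # ys'" by (cases ys) auto
    have "ys' \<noteq> []"
    proof
      assume "ys' = []"
      then have "y = v" using l ys by simp
      moreover have "r u y" using c ys spec[OF c, of 0] by simp
      ultimately show False using e' by (simp add: r_def adj_def)
    qed
    have "is_cycle E (u#ys)"
      unfolding is_cycle_def
    proof (intro conjI allI impI)
      show "3 \<le> length (u # ys)" using ys \<open>ys' \<noteq> []\<close> by (cases ys') auto
      show "distinct (u#ys)" by (fact d)
      fix i assume "Suc i < length (u#ys)"
      then have "r ((u#ys)!i) ((u#ys)!Suc i)" using c by blast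
      then show "adj E ((u#ys)!i) ((u#ys)!Suc i)" by (auto simp: r_def adj_def)
    next
      show "adj E (last (u # ys)) (hd (u # ys))" using l e' by (auto simp: adj_def insert_commute)
    qed
    with tree show False by (auto simp: is_tree_def)
  qed
  moreover have "\<forall>e\<in>E-{e'}. \<forall>a\<in>e. \<forall>b\<in>e. (a\<in>C) = (b\<in>C)"
  proof (intro ballI)
    fix e a b assume e: "e \<in> E - {e'}" and a: "a\<in>e" and b: "b\<in>e"
    have "\<exists>p q. e = {p,q} \<and> p \<noteq> q" using tree e unfolding is_tree_def simple_graph_def by blast
    then obtain p q where pq: "e = {p,q}" "p\<noteq>q" by blast
    show "(a\<in>C) = (b\<in>C)"
    proof (cases "a = b")
      case False
      then have "{a,b} = e" "{b,a} = e" using a b pq by auto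
      then have "r a b" "r b a" using e False by (auto simp: r_def adj_def)
      then show ?thesis by (auto simp: C_def intro: rtranclp.rtrancl_into_rtrancl)
    qed simp
  qed
  ultimately show ?thesis by blast
qed

theorem lemma12:
  fixes V :: "'v set" and E :: "'v set set" and n :: nat and lab :: "nat \<Rightarrow> 'v"
    and \<theta> \<theta>' :: "'v set \<Rightarrow> real" and e' :: "'v set"
  assumes "is_tree V E"
    and "bij_betw lab {1..n} (leaves V E)"
    and "\<forall>e\<in>E. \<theta> e \<in> {-1..1}"
    and "\<forall>e\<in>E. \<theta>' e \<in> {-1..1}"
    and "e' \<in> E"
    and "\<forall>e\<in>E. e \<noteq> e' \<longrightarrow> \<theta>' e = \<theta> e"
  shows "tv_leaf V E n lab \<theta> \<theta>' \<le> \<bar>\<theta>' e' - \<theta> e'\<bar> / 2"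
proof -
  have sg: "simple_graph V E" using assms(1) by (simp add: is_tree_def)
  have fin: "finite V" using sg by (simp add: simple_graph_def)
  have EV: "E \<subseteq> Pow V" using sg by (auto simp: simple_graph_def)
  have finE: "finite E" using EV fin by (meson finite_Pow_iff finite_subset)
  obtain u v where uv: "u\<in>V" "v\<in>V" "u\<noteq>v" "e' = {u,v}" using sg assms(5) by (auto simp: simple_graph_def)
  obtain C where C: "u \<in> C" "v \<notin> C" "\<forall>e\<in>E-{e'}. \<forall>a\<in>e. \<forall>b\<in>e. (a\<in>C) = (b\<in>C)"
    using cut_exists[OF assms(1) assms(5) uv(4) uv(3)] by blast
  define S where "S = spin_configs V"
  have finS: "finite S" using fin finite_spin S_def by blast
  have pm: "(\<Prod>w\<in>e. s w) = 1 \<or> (\<Prod>w\<in>e. s w) = -1" if "e \<in> E" "s \<in> S" for e s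
  proof -
    have "\<exists>a b. a\<in>V \<and> b\<in>V \<and> a\<noteq>b \<and> e = {a,b}" using sg that(1) unfolding simple_graph_def by blast
    then obtain a b where ab: "a\<in>V" "b\<in>V" "a\<noteq>b" "e = {a,b}" by blast
    have "s a = 1 \<or> s a = -1" "s b = 1 \<or> s b = -1" using that(2) ab by (auto simp: S_def spin_configs_def)
    then show ?thesis using ab by auto
  qed
  define P where "P s = (\<Prod>w\<in>e'. s w)" for s :: "'v \<Rightarrow> real"
  define R where "R s = (\<Prod>e\<in>E-{e'}. (1 + \<theta> e * (\<Prod>w\<in>e. s w))/2)" for s :: "'v \<Rightarrow> real"
  have Rnn: "R s \<ge> 0" if "s \<in> S" for s
    unfolding R_def
  proof (rule prod_nonneg)
    fix e assume e: "e \<in> E - {e'}"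
    then have "\<theta> e \<in> {-1..1}" using assms(3) by auto
    then show "0 \<le> (1 + \<theta> e * (\<Prod>w\<in>e. s w))/2" using pm[of e s] e that by auto
  qed
  have w: "ising_weight E \<theta> s = (1 + \<theta> e' * P s)/2 * R s" for s
    unfolding ising_weight_def P_def R_def by (rule prod.remove[OF finE assms(5)])
  have w': "ising_weight E \<theta>' s = (1 + \<theta>' e' * P s)/2 * R s" for s
  proof -
    have "ising_weight E \<theta>' s = (1 + \<theta>' e' * P s)/2 * (\<Prod>e\<in>E-{e'}. (1 + \<theta>' e * (\<Prod>w\<in>e. s w))/2)"
      unfolding ising_weight_def P_def by (rule prod.remove[OF finE assms(5)])
    also have "(\<Prod>e\<in>E-{e'}. (1 + \<theta>' e * (\<Prod>w\<in>e. s w))/2) = R s"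
      unfolding R_def using assms(6) by (intro prod.cong) auto
    finally show ?thesis .
  qed
  have Pv: "P s = 1 \<or> P s = -1" if "s \<in> S" for s using pm[OF assms(5) that] by (simp add: P_def)
  define fl where "fl s = (\<lambda>w. if w \<in> C \<inter> V then - s w else (s w :: real))" for s :: "'v \<Rightarrow> real"
  have flS: "fl s \<in> S" if "s \<in> S" for s
    using that by (auto simp: S_def spin_configs_def fl_def)
  have flfl: "fl (fl s) = s" for s by (auto simp: fl_def)
  have Rfl: "R (fl s) = R s" for s
    unfolding R_def
  proof (rule prod.cong[OF refl])
    fix e assume e: "e \<in> E - {e'}"
    have "\<exists>a b. a\<in>V \<and> b\<in>V \<and> a\<noteq>b \<and> e = {a,b}" using sg e unfolding simple_graph_def by blast
    then obtain a b where ab: "a\<in>V" "b\<in>V" "a\<noteq>b" "e = {a,b}" by blast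
    have "(a\<in>C) = (b\<in>C)" using C(3) e ab by auto
    then have "(\<Prod>w\<in>e. fl s w) = (\<Prod>w\<in>e. s w)" using ab by (auto simp: fl_def)
    then show "(1 + \<theta> e * (\<Prod>w\<in>e. fl s w)) / 2 = (1 + \<theta> e * (\<Prod>w\<in>e. s w)) / 2" by simp
  qed
  have Pfl: "P (fl s) = - P s" for s
    using uv C by (auto simp: P_def fl_def)
  define A where "A = (\<Sum>s\<in>S. R s)"
  have B: "(\<Sum>s\<in>S. R s * P s) = 0"
  proof -
    have "(\<Sum>s\<in>S. R s * P s) = (\<Sum>s\<in>S. R (fl s) * P (fl s))"
      by (rule sum.reindex_bij_witness[where i=fl and j=fl]) (auto simp: flfl flS)
    also have "\<dots> = - (\<Sum>s\<in>S. R s * P s)" by (simp add: Rfl Pfl sum_negf)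
    finally show ?thesis by simp
  qed
  have Zgen: "partition_fn V E t = A / 2" if "\<And>s. ising_weight E t s = (1 + t e' * P s)/2 * R s" for t
  proof -
    have "partition_fn V E t = (\<Sum>s\<in>S. R s / 2 + t e' / 2 * (R s * P s))"
      unfolding partition_fn_def S_def[symmetric] using that by (intro sum.cong) (auto simp: field_simps)
    also have "\<dots> = A / 2 + t e' / 2 * (\<Sum>s\<in>S. R s * P s)"
      by (simp add: sum.distrib sum_distrib_left sum_divide_distrib A_def)
    finally show ?thesis using B by simp
  qed
  have Z: "partition_fn V E \<theta> = A / 2" by (rule Zgen) (rule w)
  have Z': "partition_fn V E \<theta>' = A / 2" by (rule Zgen) (rule w')
  have Ann: "A \<ge> 0" unfolding A_def using Rnn by (simp add: sum_nonneg)
  have diff: "\<bar>ising_weight E \<theta> s - ising_weight E \<theta>' s\<bar> = \<bar>\<theta>' e' - \<theta> e'\<bar>/2 * R s" if "s \<in> S" for s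
  proof -
    have h: "ising_weight E \<theta> s - ising_weight E \<theta>' s = (\<theta> e' - \<theta>' e') * P s / 2 * R s"
      by (simp add: w w' field_simps)
    have "\<bar>ising_weight E \<theta> s - ising_weight E \<theta>' s\<bar> = \<bar>\<theta> e' - \<theta>' e'\<bar> * \<bar>P s\<bar> / 2 * \<bar>R s\<bar>"
      unfolding h by (simp add: abs_mult)
    moreover have "\<bar>P s\<bar> = 1" using Pv[OF that] by auto
    moreover have "\<bar>R s\<bar> = R s" using Rnn[OF that] by simp
    ultimately show ?thesis by (simp add: abs_minus_commute)
  qed
  define g where "g s = (\<lambda>i. if i \<in> {1..n} then s (lab i) else (1::real))" for s :: "'v \<Rightarrow> real"
  have labV: "lab i \<in> V" if "i \<in> {1..n}" for i
    using assms(2) that by (auto simp: bij_betw_def leaves_def)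
  have gS: "g ` S \<subseteq> leaf_configs n"
    using labV by (auto simp: g_def S_def spin_configs_def leaf_configs_def)
  have fiber: "{s \<in> spin_configs V. \<forall>i\<in>{1..n}. s (lab i) = x i} = {s. s \<in> S \<and> g s = x}"
    if "x \<in> leaf_configs n" for x
    using that by (auto simp: S_def g_def leaf_configs_def fun_eq_iff)
  let ?L = "leaf_configs n"
  let ?w = "ising_weight E \<theta>" and ?w' = "ising_weight E \<theta>'"
  let ?D = "\<lambda>s. \<bar>?w s - ?w' s\<bar>"
  have step: "\<bar>leaf_marginal V E n lab \<theta> x - leaf_marginal V E n lab \<theta>' x\<bar>
      \<le> (\<Sum>s\<in>{s. s \<in> S \<and> g s = x}. ?D s) / (A/2)" if "x \<in> ?L" for x
  proof -
    have "leaf_marginal V E n lab \<theta> x - leaf_marginal V E n lab \<theta>' x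
        = (\<Sum>s\<in>{s. s \<in> S \<and> g s = x}. ?w s - ?w' s) / (A/2)"
      unfolding leaf_marginal_def fiber[OF that] Z Z' by (simp add: sum_subtractf diff_divide_distrib)
    then have "\<bar>leaf_marginal V E n lab \<theta> x - leaf_marginal V E n lab \<theta>' x\<bar>
        = \<bar>\<Sum>s\<in>{s. s \<in> S \<and> g s = x}. ?w s - ?w' s\<bar> / (A/2)" using Ann by (simp add: abs_mult)
    also have "\<dots> \<le> (\<Sum>s\<in>{s. s \<in> S \<and> g s = x}. ?D s) / (A/2)"
      using Ann by (intro divide_right_mono sum_abs) auto
    finally show ?thesis .
  qed
  have "tv_leaf V E n lab \<theta> \<theta>' \<le> 1/2 * (\<Sum>x\<in>?L. (\<Sum>s\<in>{s. s \<in> S \<and> g s = x}. ?D s) / (A/2))"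
    unfolding tv_leaf_def using step by (intro mult_left_mono sum_mono) auto
  also have "\<dots> = 1/2 * ((\<Sum>s\<in>S. ?D s) / (A/2))"
    unfolding sum_divide_distrib[symmetric] sum.group[OF finS finite_leaf gS] ..
  also have "(\<Sum>s\<in>S. ?D s) = \<bar>\<theta>' e' - \<theta> e'\<bar>/2 * A"
    unfolding A_def sum_distrib_left using diff by (intro sum.cong) auto
  also have "1/2 * (\<bar>\<theta>' e' - \<theta> e'\<bar>/2 * A / (A/2)) \<le> \<bar>\<theta>' e' - \<theta> e'\<bar> / 2"
    by (cases "A = 0") auto
  finally show ?thesis .
qed

end
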